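(* Let $n\ge 2$, let $A_1,\dots,A_n$ be $n$ pairwise distinct points in the plane, and let $\Gamma$ be a circle with centre $O$. Suppose that for every $k\in\{1,2,\dots,n-1\}$ the quantity $\sum_{i=1}^n |PA_i|^{2k}$ does not depend on the position of the point $P\in\Gamma$. Then $A_1,\dots,A_n$ are the vertices of a regular $n$-gon inscribed in a circle centred at $O$.
   Context: $|PA|$ denotes Euclidean distance. For $n=2$ a "regular $2$-gon inscribed in a circle centred at $O$" means two distinct points symmetric with respect to $O$. *)

theory Defs
  imports Complex_Main
begin

text \<open>For n = 2 this is a pair of distinct points symmetric about Oc.\<close>

definition regular_ngon_centred :: "complex \<Rightarrow> nat \<Rightarrow> complex set \<Rightarrow> bool" where
  "regular_ngon_centred Oc n S \<longleftrightarrow>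
     (\<exists>R::real. R > 0 \<and> (\<exists>\<theta>::real.
        S = {Oc + complex_of_real R * cis (\<theta> + 2 * pi * real j / real n) | j. j < n}))"

end

theory Submission imports Defs "HOL-Computational_Algebra.Polynomial" begin
lemma circle_infinite:
  assumes "(r::real) > 0" shows "infinite {w::complex. cmod w = r}"
proof
  assume fin: "finite {w::complex. cmod w = r}"
  define f where "f = (\<lambda>x::real. Complex x (sqrt (r^2 - x^2)))"
  have "f ` {0..r} \<subseteq> {w. cmod w = r}"
  proof
    fix w assume "w \<in> f ` {0..r}"
    then obtain x where x: "x \<in> {0..r}" "w = f x" by auto
    have "x^2 \<le> r^2" using x by (auto intro: power_mono)
    then show "w \<in> {w. cmod w = r}" using x assms
      by (simp add: f_def cmod_def)
  qed
  moreover have "inj_on f {0..r}" unfolding inj_on_def f_def by simp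
  ultimately have "finite {0..r}" using fin finite_subset finite_imageD by metis
  then show False using assms infinite_Icc by blast
qed

lemma psum_zero:
  fixes B :: "nat \<Rightarrow> complex" and I :: "nat set" and r c :: real and k :: nat
  assumes "finite I" "r > 0" "k \<ge> 1"
    and H: "\<forall>w. cmod w = r \<longrightarrow> (\<Sum>i\<in>I. cmod (w - B i) ^ (2*k)) = c"
  shows "(\<Sum>i\<in>I. B i ^ k) = 0"
proof -
  define Q where "Q = (\<Sum>i\<in>I. ([:-B i, 1:] * [:of_real (r^2), -cnj (B i):])^k) - monom (of_real c) k"
  have roots: "poly Q w = 0" if w: "cmod w = r" for w
  proof -
    have wc: "w * cnj w = of_real (r^2)" using complex_norm_square[of w] w by simp
    have e: "(-B i + w) * (of_real(r^2) + w * (- cnj(B i))) = w * of_real (cmod (w - B i)^2)" for i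
      unfolding complex_norm_square wc[symmetric] by (simp add: algebra_simps)
    have "poly Q w = (\<Sum>i\<in>I. ((-B i + w) * (of_real(r^2) + w * (- cnj(B i))))^k) - of_real c * w^k"
      unfolding Q_def poly_diff poly_sum poly_power poly_mult poly_monom
      by (intro arg_cong2[where f="(-)"] sum.cong refl arg_cong[where f="\<lambda>x. x^k"]) (simp add: algebra_simps)
    also have "\<dots> = (\<Sum>i\<in>I. (w * of_real (cmod (w - B i)^2))^k) - of_real c * w^k"
      by (simp only: e)
    also have "\<dots> = w^k * (of_real (\<Sum>i\<in>I. cmod (w - B i) ^ (2*k)) - of_real c)"
      by (simp add: power_mult_distrib sum_distrib_left algebra_simps flip: power_mult)
    also have "\<dots> = 0" using H w by simp
    finally show ?thesis .
  qed
  have "Q = 0"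
  proof (rule ccontr)
    assume "Q \<noteq> 0"
    then have "finite {x. poly Q x = 0}" by (rule poly_roots_finite)
    moreover have "{w. cmod w = r} \<subseteq> {x. poly Q x = 0}" using roots by auto
    ultimately show False using circle_infinite[OF assms(2)] finite_subset by blast
  qed
  then have "coeff Q 0 = 0" by simp
  moreover have "coeff Q 0 = (- of_real (r^2))^k * (\<Sum>i\<in>I. B i ^ k)"
    using assms(3) unfolding Q_def
    by (simp add: coeff_sum coeff_mult_0 coeff_0_power sum_distrib_left sum_distrib_right power_mult_distrib[symmetric] mult.commute)
  moreover have "(- of_real (r^2) :: complex)^k \<noteq> 0" using assms(2) by simp
  ultimately show ?thesis using assms(2) by auto
qed
lemma newton:
  fixes B :: "nat \<Rightarrow> complex" and I :: "nat set" and n :: nat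
  assumes fin: "finite I" and cI: "card I = n" and n1: "n \<ge> 1"
    and ps: "\<forall>s. 1 \<le> s \<and> s \<le> n-1 \<longrightarrow> (\<Sum>i\<in>I. B i ^ s) = 0"
  shows "\<exists>c. \<forall>i\<in>I. B i ^ n = c"
proof -
  define p where "p = (\<Prod>i\<in>I. [:-B i, 1:])"
  define L where "L j = (\<Prod>i\<in>I-{j}. [:-B i, 1:])" for j
  define T where "T s = (\<Sum>j\<in>I. smult (B j ^ s) (L j))" for s
  define X :: "complex poly" where "X = [:0,1:]"
  have pL: "p = [:-B j, 1:] * L j" if "j \<in> I" for j
    unfolding p_def L_def by (rule prod.remove[OF fin that])
  have XL: "X * L j = p + smult (B j) (L j)" if "j \<in> I" for j
  proof -
    have "X = [:-B j,1:] + [:B j:]" unfolding X_def by simp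
    then have "X * L j = [:-B j,1:] * L j + [:B j:] * L j" by (simp add: distrib_right)
    then show ?thesis using pL[OF that] by simp
  qed
  have XT: "X * T s = smult (\<Sum>j\<in>I. B j ^ s) p + T (Suc s)" for s
  proof -
    have "X * T s = (\<Sum>j\<in>I. smult (B j ^ s) (X * L j))"
      unfolding T_def by (simp add: sum_distrib_left)
    also have "\<dots> = (\<Sum>j\<in>I. smult (B j ^ s) p + smult (B j ^ Suc s) (L j))"
      by (intro sum.cong refl) (simp add: XL smult_add_right mult.commute)
    also have "\<dots> = smult (\<Sum>j\<in>I. B j ^ s) p + T (Suc s)"
      unfolding T_def by (simp add: sum.distrib smult_sum)
    finally show ?thesis .
  qed
  have dp: "pderiv p = T 0"
    unfolding p_def T_def L_def pderiv_prod by (simp add: pderiv_pCons)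
  have Xdp: "X * pderiv p = smult (of_nat n) p + T 1"
    using XT[of 0] dp cI by simp
  have iter: "m + 1 \<le> n \<Longrightarrow> X^m * T 1 = T (m+1)" for m
  proof (induction m)
    case 0 then show ?case by simp
  next
    case (Suc m)
    have z: "(\<Sum>j\<in>I. B j ^ (m+1)) = 0" using ps[rule_format, of "m+1"] Suc.prems by simp
    have "X^(Suc m) * T 1 = X * (X^m * T 1)" by (simp add: mult.assoc)
    also have "\<dots> = X * T (m+1)" using Suc by simp
    also have "\<dots> = T (Suc m + 1)" using XT[of "m+1"] z by simp
    finally show ?case .
  qed
  define q where "q = X * pderiv p - smult (of_nat n) p"
  have qT: "q = T 1" unfolding q_def using Xdp by simp
  have degL: "degree (L j) \<le> n - 1" if "j \<in> I" for j
  proof -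
    have "degree (L j) \<le> (\<Sum>i\<in>I-{j}. degree [:-B i, 1:])"
      unfolding L_def using degree_prod_sum_le[of "I-{j}" "\<lambda>i. [:-B i, 1:]"] fin by (simp add: o_def)
    also have "\<dots> = card (I - {j})" by simp
    also have "\<dots> = n - 1" using cI that fin by simp
    finally show ?thesis .
  qed
  have degTn: "degree (T n) \<le> n - 1"
    unfolding T_def using fin degL by (intro degree_sum_le) (auto intro: order.trans[OF degree_smult_le])
  have XqT: "X^(n-1) * q = T n" using iter[of "n-1"] n1 qT by simp
  have degX: "degree (X^m) = m" for m unfolding X_def using degree_linear_power[of 0 m] by simp
  have dq: "degree q = 0"
  proof (cases "q = 0")
    case False
    have "X^(n-1) \<noteq> 0" unfolding X_def by simp
    then have "degree (X^(n-1) * q) = (n-1) + degree q" using False degree_mult_eq degX by metis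
    then show ?thesis using XqT degTn by simp
  qed simp
  have cq: "coeff q (Suc k) = 0" for k using dq by (simp add: coeff_eq_0)
  have cp: "coeff p (Suc k) = 0" if "Suc k < n" for k
  proof -
    have "coeff q (Suc k) = (of_nat (Suc k) - of_nat n) * coeff p (Suc k)"
      unfolding q_def X_def by (simp add: coeff_pderiv algebra_simps)
    moreover have "(of_nat (Suc k) - of_nat n :: complex) \<noteq> 0"
    proof
      assume "(of_nat (Suc k) - of_nat n :: complex) = 0"
      then have "(of_nat (Suc k) :: complex) = of_nat n" by simp
      then have "Suc k = n" using of_nat_eq_iff by blast
      then show False using that by simp
    qed
    ultimately show ?thesis using cq[of k] by simp
  qed
  have degp: "degree p = n"
    unfolding p_def using degree_prod_sum_eq[of I "\<lambda>i. [:-B i, 1:]"] cI by simp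
  have lcp: "coeff p n = 1"
    using lead_coeff_prod[of "\<lambda>i. [:-B i, 1:]" I] degp unfolding p_def by simp
  have peq: "p = monom 1 n + [:coeff p 0:]"
  proof (rule poly_eqI)
    fix k
    show "coeff p k = coeff (monom 1 n + [:coeff p 0:]) k"
    proof (cases k)
      case 0 then show ?thesis using n1 by simp
    next
      case (Suc k')
      then show ?thesis
        using cp[of k'] lcp coeff_eq_0[of p k] degp by (cases "k < n") (auto simp: linorder_not_less)
    qed
  qed
  have "B i ^ n = - coeff p 0" if "i \<in> I" for i
  proof -
    have "poly p (B i) = 0" unfolding p_def poly_prod using fin that
      by (auto intro: prod_zero)
    moreover have "poly p (B i) = B i ^ n + coeff p 0"
      by (subst peq) (simp add: poly_monom)
    ultimately show ?thesis by (simp add: add_eq_0_iff)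
  qed
  then show ?thesis by blast
qed
theorem mainTheorem1:
  fixes n :: nat and A :: "nat \<Rightarrow> complex" and Oc :: complex and r :: real
  assumes "n \<ge> 2"
    and "inj_on A {1..n}"
    and "r > 0"
    and "\<forall>k\<in>{1..n-1}. \<exists>c::real. \<forall>P. dist P Oc = r \<longrightarrow>
           (\<Sum>i=1..n. dist P (A i) ^ (2*k)) = c"
  shows "regular_ngon_centred Oc n (A ` {1..n})"
proof -
  define I where "I = {1..n}"
  define B where "B i = A i - Oc" for i
  have fin: "finite I" and cI: "card I = n" unfolding I_def by auto
  have ps: "\<forall>s. 1 \<le> s \<and> s \<le> n-1 \<longrightarrow> (\<Sum>i\<in>I. B i ^ s) = 0"
  proof (intro allI impI)
    fix s assume s: "1 \<le> s \<and> s \<le> n-1"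
    then have "s \<in> {1..n-1}" by simp
    then have "\<exists>c::real. \<forall>P. dist P Oc = r \<longrightarrow> (\<Sum>i=1..n. dist P (A i) ^ (2*s)) = c"
      by (rule bspec[OF assms(4)])
    then obtain c :: real where c: "\<forall>P. dist P Oc = r \<longrightarrow> (\<Sum>i=1..n. dist P (A i) ^ (2*s)) = c"
      ..
    have "\<forall>w. cmod w = r \<longrightarrow> (\<Sum>i\<in>I. cmod (w - B i) ^ (2*s)) = c"
    proof (intro allI impI)
      fix w :: complex assume w: "cmod w = r"
      have "dist (Oc + w) Oc = r" using w by (simp add: dist_norm)
      then have "(\<Sum>i=1..n. dist (Oc + w) (A i) ^ (2*s)) = c" using c by blast
      moreover have "dist (Oc + w) (A i) = cmod (w - B i)" for i
        unfolding B_def dist_norm by (simp add: algebra_simps)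
      ultimately show "(\<Sum>i\<in>I. cmod (w - B i) ^ (2*s)) = c" unfolding I_def by simp
    qed
    then show "(\<Sum>i\<in>I. B i ^ s) = 0" using psum_zero[OF fin assms(3)] s by blast
  qed
  obtain c0 where c0: "\<forall>i\<in>I. B i ^ n = c0"
    using newton[OF fin cI _ ps] assms(1) by auto
  have injB: "inj_on B I"
  proof (rule inj_onI)
    fix x y assume xy: "x \<in> I" "y \<in> I" "B x = B y"
    then have "A x = A y" unfolding B_def by simp
    from inj_onD[OF assms(2) this] xy(1,2) show "x = y" unfolding I_def by blast
  qed
  have n0: "n > 0" using assms(1) by simp
  have c0nz: "c0 \<noteq> 0"
  proof
    assume "c0 = 0"
    then have "B 1 = 0" "B 2 = 0" using c0 n0 assms(1) unfolding I_def by auto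
    moreover have "(1::nat) \<in> I" "(2::nat) \<in> I" using assms(1) unfolding I_def by auto
    ultimately have "(1::nat) = 2" using inj_onD[OF injB] by metis
    then show False by simp
  qed
  define c' where "c' = root n (norm c0) * cis (Arg c0 / n)"
  have bij: "bij_betw (\<lambda>z. c' * z) {z. z ^ n = 1} {z. z ^ n = c0}"
    unfolding c'_def by (rule bij_betw_nth_root_unity[OF c0nz n0])
  have cardR: "card {z. z ^ n = c0} = n"
    using bij_betw_same_card[OF bij] card_roots_unity_eq[OF n0] by simp
  have finR: "finite {z. z ^ n = c0}"
    using cardR n0 card.infinite by force
  have BR: "B ` I = {z. z ^ n = c0}"
    using c0 card_image[OF injB] cI cardR finR by (intro card_subset_eq) auto
  have R: "{z. z ^ n = c0} = (\<lambda>k. c' * cis (2 * pi * real k / real n)) ` {..<n}"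
  proof -
    have e1: "(*) c' ` {z. z^n = 1} = {z. z^n = c0}" using bij by (simp add: bij_betw_def)
    have e2: "(\<lambda>k. cis (2 * pi * real k / real n)) ` {..<n} = {z. z^n = 1}"
      using bij_betw_roots_unity[OF n0] by (simp add: bij_betw_def)
    have "{z. z ^ n = c0} = (*) c' ` ((\<lambda>k. cis (2 * pi * real k / real n)) ` {..<n})"
      unfolding e2 e1 ..
    then show ?thesis by (simp add: image_image)
  qed
  have AI: "A ` I = (\<lambda>z. Oc + z) ` (B ` I)" unfolding B_def by (simp add: image_image)
  define Rr where "Rr = root n (norm c0)"
  define th where "th = Arg c0 / n"
  have Rpos: "Rr > 0" unfolding Rr_def using c0nz n0 by simp
  have eq: "c' * cis (2 * pi * real k / real n) = complex_of_real Rr * cis (th + 2 * pi * real k / real n)" for k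
    unfolding c'_def Rr_def th_def by (simp add: cis_mult mult.assoc)
  have "A ` {1..n} = {Oc + complex_of_real Rr * cis (th + 2 * pi * real j / real n) | j. j < n}"
    unfolding I_def[symmetric] AI BR R by (auto simp: eq image_image)
  then show ?thesis unfolding regular_ngon_centred_def using Rpos by blast
qed
end
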